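(* Let a countable group $G$ act freely and continuously on a zero-dimensional Polish space $X$. Let $E$ be a finite $G$-clopen equivalence relation on $X$ and suppose there is a finite set $K\subseteq G$ with $[x]_E\subseteq K\cdot x$ for all $x\in X$. Then there is a continuous, $G$-clopen function $S:X\to X$ (a selector for $E$) such that for all $x,y\in X$, $x\mathrel{E}S(x)$, and $x\mathrel{E}y\iff S(x)=S(y)$.
   Context: A relation $R\subseteq X\times X$ (in particular the graph $\{(x,S(x))\}$ of a function $S$) is $G$-clopen if for every $g\in G$ the set $\{x\in X:(x,g\cdot x)\in R\}$ is clopen. $E$ is finite if each class $[x]_E$ is finite. *)

theory Defs
  imports "HOL-Analysis.Analysis" "HOL-Algebra.Group_Action"
begin

definition zero_dimensional :: "'x::topological_space itself \<Rightarrow> bool" where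
  "zero_dimensional _ \<longleftrightarrow>
     (\<exists>B :: 'x set set. topological_basis B \<and> (\<forall>b\<in>B. open b \<and> closed b))"

definition G_clopen :: "('g, 'b) monoid_scheme \<Rightarrow> ('g \<Rightarrow> 'x::topological_space \<Rightarrow> 'x) \<Rightarrow> ('x \<times> 'x) set \<Rightarrow> bool" where
  "G_clopen G \<phi> R \<longleftrightarrow>
     (\<forall>g\<in>carrier G. open {x. (x, \<phi> g x) \<in> R} \<and> closed {x. (x, \<phi> g x) \<in> R})"

definition graph_of :: "('x \<Rightarrow> 'x) \<Rightarrow> ('x \<times> 'x) set" where
  "graph_of S = {(x, S x) | x. True}"

end

theory Submission imports Defs begin

definition lexlt :: "(nat \<Rightarrow> 'x set) \<Rightarrow> 'x \<Rightarrow> 'x \<Rightarrow> bool" where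
  "lexlt D x y \<longleftrightarrow> (\<exists>n. (\<forall>m<n. (x \<in> D m \<longleftrightarrow> y \<in> D m)) \<and> x \<notin> D n \<and> y \<in> D n)"

lemma lexlt_irrefl: "\<not> lexlt D x x" unfolding lexlt_def by auto

lemma lexlt_asym: "lexlt D x y \<Longrightarrow> \<not> lexlt D y x"
  unfolding lexlt_def by (metis linorder_neqE_nat)

lemma lexlt_trans: assumes "lexlt D x y" "lexlt D y z" shows "lexlt D x z"
proof -
  obtain n1 where n1: "\<forall>m<n1. (x \<in> D m \<longleftrightarrow> y \<in> D m)" "x \<notin> D n1" "y \<in> D n1"
    using assms(1) unfolding lexlt_def by blast
  obtain n2 where n2: "\<forall>m<n2. (y \<in> D m \<longleftrightarrow> z \<in> D m)" "y \<notin> D n2" "z \<in> D n2"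
    using assms(2) unfolding lexlt_def by blast
  show ?thesis unfolding lexlt_def
  proof (cases n1 n2 rule: linorder_cases)
    case less thus "\<exists>n. (\<forall>m<n. (x \<in> D m \<longleftrightarrow> z \<in> D m)) \<and> x \<notin> D n \<and> z \<in> D n"
      using n1 n2 by (intro exI[of _ n1]) auto
  next
    case equal thus "\<exists>n. (\<forall>m<n. (x \<in> D m \<longleftrightarrow> z \<in> D m)) \<and> x \<notin> D n \<and> z \<in> D n"
      using n1 n2 by auto
  next
    case greater thus "\<exists>n. (\<forall>m<n. (x \<in> D m \<longleftrightarrow> z \<in> D m)) \<and> x \<notin> D n \<and> z \<in> D n"
      using n1 n2 by (intro exI[of _ n2]) auto
  qed
qed

lemma lexlt_total:
  assumes sep: "\<And>x y. x \<noteq> y \<Longrightarrow> \<exists>n. (x \<in> D n) \<noteq> (y \<in> D n)" and "x \<noteq> y"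
  shows "lexlt D x y \<or> lexlt D y x"
proof -
  define n where "n = (LEAST n. (x \<in> D n) \<noteq> (y \<in> D n))"
  have "(x \<in> D n) \<noteq> (y \<in> D n)" unfolding n_def using sep[OF assms(2)] by (rule LeastI_ex)
  moreover have "\<forall>m<n. (x \<in> D m \<longleftrightarrow> y \<in> D m)" unfolding n_def using not_less_Least by blast
  ultimately show ?thesis unfolding lexlt_def by blast
qed

lemma lexlt_min_ex:
  assumes sep: "\<And>x y. x \<noteq> y \<Longrightarrow> \<exists>n. (x \<in> D n) \<noteq> (y \<in> D n)"
  shows "finite A \<Longrightarrow> A \<noteq> {} \<Longrightarrow> \<exists>m\<in>A. \<forall>z\<in>A. z \<noteq> m \<longrightarrow> lexlt D m z"
proof (induction A rule: finite_ne_induct)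
  case (singleton x) then show ?case by auto
next
  case (insert x F)
  then obtain m where m: "m \<in> F" "\<forall>z\<in>F. z \<noteq> m \<longrightarrow> lexlt D m z" by blast
  show ?case
  proof (cases "lexlt D x m")
    case True
    have "\<forall>z\<in>insert x F. z \<noteq> x \<longrightarrow> lexlt D x z"
    proof (intro ballI impI)
      fix z assume "z \<in> insert x F" "z \<noteq> x"
      then have "z \<in> F" by auto
      show "lexlt D x z"
      proof (cases "z = m")
        case True then show ?thesis using \<open>lexlt D x m\<close> by simp
      next
        case False
        then have "lexlt D m z" using m(2) \<open>z \<in> F\<close> by blast
        then show ?thesis by (rule lexlt_trans[OF \<open>lexlt D x m\<close>])
      qed
    qed
    then show ?thesis by blast
  next
    case False
    have "x \<noteq> m" using m(1) insert.hyps by blast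
    then have "lexlt D m x" using lexlt_total[of D, OF sep \<open>x \<noteq> m\<close>] False by blast
    then show ?thesis using m by (intro bexI[of _ m]) auto
  qed
qed

definition lexmin :: "(nat \<Rightarrow> 'x set) \<Rightarrow> 'x set \<Rightarrow> 'x" where
  "lexmin D A = (THE m. m \<in> A \<and> (\<forall>z\<in>A. z \<noteq> m \<longrightarrow> lexlt D m z))"

lemma lexmin_eq:
  assumes "m \<in> A" "\<forall>z\<in>A. z \<noteq> m \<longrightarrow> lexlt D m z"
  shows "lexmin D A = m"
  unfolding lexmin_def
proof (rule the_equality)
  show "m \<in> A \<and> (\<forall>z\<in>A. z \<noteq> m \<longrightarrow> lexlt D m z)" using assms by blast
next
  fix m' assume m': "m' \<in> A \<and> (\<forall>z\<in>A. z \<noteq> m' \<longrightarrow> lexlt D m' z)"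
  show "m' = m"
  proof (rule ccontr)
    assume "m' \<noteq> m"
    then have "lexlt D m m'" "lexlt D m' m" using assms m' by auto
    then show False using lexlt_asym[of D m m'] by blast
  qed
qed

lemma lexmin_in:
  assumes sep: "\<And>x y. x \<noteq> y \<Longrightarrow> \<exists>n. (x \<in> D n) \<noteq> (y \<in> D n)" and "finite A" "A \<noteq> {}"
  shows "lexmin D A \<in> A"
proof -
  obtain m where "m \<in> A" "\<forall>z\<in>A. z \<noteq> m \<longrightarrow> lexlt D m z"
    using lexlt_min_ex[of D, OF sep assms(2,3)] by blast
  then show ?thesis using lexmin_eq[of m A D] by simp
qed

lemma lexmin_prop:
  assumes sep: "\<And>x y. x \<noteq> y \<Longrightarrow> \<exists>n. (x \<in> D n) \<noteq> (y \<in> D n)" and "finite A" "A \<noteq> {}"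
  shows "\<forall>z\<in>A. z \<noteq> lexmin D A \<longrightarrow> lexlt D (lexmin D A) z"
proof -
  obtain m where "m \<in> A" "\<forall>z\<in>A. z \<noteq> m \<longrightarrow> lexlt D m z"
    using lexlt_min_ex[of D, OF sep assms(2,3)] by blast
  then show ?thesis using lexmin_eq[of m A D] by simp
qed

lemma lexlt_local:
  fixes f h :: "'a::topological_space \<Rightarrow> 'x::topological_space"
  assumes clo: "\<And>n. open (D n) \<and> closed (D n)"
    and cf: "continuous_on UNIV f" and ch: "continuous_on UNIV h"
    and lt: "lexlt D (f x) (h x)"
  shows "\<exists>W. open W \<and> x \<in> W \<and> (\<forall>y\<in>W. lexlt D (f y) (h y))"
proof -
  obtain n where n: "\<forall>m<n. (f x \<in> D m \<longleftrightarrow> h x \<in> D m)" "f x \<notin> D n" "h x \<in> D n"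
    using lt unfolding lexlt_def by blast
  have op: "open {y. (g y \<in> D m) = c}" if "continuous_on UNIV g" for g :: "'a \<Rightarrow> 'x" and m c
  proof (cases c)
    case True
    then have "{y. (g y \<in> D m) = c} = g -` D m" by auto
    moreover have "open (g -` D m \<inter> UNIV)" using continuous_on_open_vimage[OF open_UNIV, of g] that clo by blast
    ultimately show ?thesis by simp
  next
    case False
    then have "{y. (g y \<in> D m) = c} = g -` (- D m)" by auto
    moreover have "open (- D m)" using clo by (simp add: open_Compl)
    then have "open (g -` (- D m) \<inter> UNIV)" using continuous_on_open_vimage[OF open_UNIV, of g] that by blast
    ultimately show ?thesis by simp
  qed
  define W where "W = (\<Inter>m\<in>{..n}. {y. (f y \<in> D m) = (f x \<in> D m)} \<inter> {y. (h y \<in> D m) = (h x \<in> D m)})"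
  have "open W" unfolding W_def
    apply (rule open_INT)
     apply simp
    apply (intro ballI open_Int op[OF cf] op[OF ch])
    done
  moreover have "x \<in> W" unfolding W_def by auto
  moreover have "\<forall>y\<in>W. lexlt D (f y) (h y)"
  proof
    fix y assume "y \<in> W"
    then have yW: "\<And>m. m \<le> n \<Longrightarrow> (f y \<in> D m) = (f x \<in> D m) \<and> (h y \<in> D m) = (h x \<in> D m)"
      unfolding W_def by blast
    have "\<forall>m<n. (f y \<in> D m) = (h y \<in> D m)"
    proof (intro allI impI)
      fix m assume "m < n"
      then show "(f y \<in> D m) = (h y \<in> D m)" using yW[of m] n(1) by simp
    qed
    moreover have "f y \<notin> D n" "h y \<in> D n" using yW[of n] n(2,3) by simp_all
    ultimately show "lexlt D (f y) (h y)" unfolding lexlt_def by blast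
  qed
  ultimately show ?thesis by blast
qed


theorem lemma3p6:
  fixes G :: "('g, 'b) monoid_scheme"
    and \<phi> :: "'g \<Rightarrow> 'x::polish_space \<Rightarrow> 'x"
    and E :: "('x \<times> 'x) set"
    and K :: "'g set"
  assumes act: "group_action G (UNIV :: 'x set) \<phi>"
    and cnt: "countable (carrier G)"
    and free: "\<And>x. stabilizer G \<phi> x = {\<one>\<^bsub>G\<^esub>}"
    and cont: "\<And>g. g \<in> carrier G \<Longrightarrow> continuous_on UNIV (\<phi> g)"
    and zd: "zero_dimensional TYPE('x)"
    and eqv: "equiv UNIV E"
    and fin: "\<And>x. finite (E `` {x})"
    and Eclo: "G_clopen G \<phi> E"
    and K: "K \<subseteq> carrier G" "finite K"
    and EK: "\<And>x. E `` {x} \<subseteq> (\<lambda>g. \<phi> g x) ` K"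
  shows "\<exists>S :: 'x \<Rightarrow> 'x. continuous_on UNIV S \<and> G_clopen G \<phi> (graph_of S) \<and>
           (\<forall>x. (x, S x) \<in> E) \<and> (\<forall>x y. (x, y) \<in> E \<longleftrightarrow> S x = S y)"
proof -
  obtain B :: "'x set set" where B: "topological_basis B" "\<forall>b\<in>B. open b \<and> closed b"
    using zd unfolding zero_dimensional_def by blast
  obtain C :: "'x set set" where C: "countable C" "topological_basis C"
    using ex_countable_basis by blast
  define P where "P = {(c,c'). c\<in>C \<and> c'\<in>C \<and> (\<exists>b\<in>B. c\<subseteq>b \<and> b\<subseteq>c')}"
  define ch where "ch = (\<lambda>(c,c'). SOME b. b\<in>B \<and> c\<subseteq>b \<and> b\<subseteq>c')"
  define F where "F = ch ` P"
  have "P \<subseteq> C \<times> C" unfolding P_def by auto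
  moreover have "countable (C \<times> C)" using C(1) by simp
  ultimately have "countable P" by (rule countable_subset)
  then have cF: "countable F" unfolding F_def by simp
  have chP: "ch p \<in> B \<and> fst p \<subseteq> ch p \<and> ch p \<subseteq> snd p" if "p \<in> P" for p
  proof -
    obtain c c' where p: "p = (c,c')" by force
    have "\<exists>b. b\<in>B \<and> c\<subseteq>b \<and> b\<subseteq>c'" using that p unfolding P_def by auto
    then show ?thesis unfolding ch_def p using someI_ex[of "\<lambda>b. b\<in>B \<and> c\<subseteq>b \<and> b\<subseteq>c'"] by simp
  qed
  have FB: "F \<subseteq> B" unfolding F_def using chP by auto
  have sepF: "\<exists>b\<in>F. x\<in>b \<and> y\<notin>b" if xy: "x \<noteq> y" for x y
  proof -
    obtain U where U: "open U" "x \<in> U" "y \<notin> U" using separation_t1[THEN iffD1, OF xy] by blast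
    obtain c' where c': "c' \<in> C" "x \<in> c'" "c' \<subseteq> U" using topological_basisE[OF C(2) U(1,2)] by blast
    have "open c'" using C(2) c'(1) topological_basis_open by blast
    obtain b where b: "b \<in> B" "x \<in> b" "b \<subseteq> c'" using topological_basisE[OF B(1) \<open>open c'\<close> c'(2)] by blast
    have "open b" using B(2) b(1) by blast
    obtain c where c: "c \<in> C" "x \<in> c" "c \<subseteq> b" using topological_basisE[OF C(2) \<open>open b\<close> b(2)] by blast
    have "(c,c') \<in> P" unfolding P_def using b c c' by auto
    then have "ch (c,c') \<in> F" "c \<subseteq> ch (c,c')" "ch (c,c') \<subseteq> c'"
      using chP[OF \<open>(c,c') \<in> P\<close>] unfolding F_def by (auto intro: imageI)
    moreover have "x \<in> ch (c,c')" using c(2) \<open>c \<subseteq> ch (c,c')\<close> by blast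
    moreover have "y \<notin> ch (c,c')" using U(3) c'(3) \<open>ch (c,c') \<subseteq> c'\<close> by blast
    ultimately show ?thesis by blast
  qed
  define D where "D = from_nat_into (insert UNIV F)"
  have clo: "open (D n) \<and> closed (D n)" for n
  proof -
    have "D n \<in> insert UNIV F" unfolding D_def by (rule from_nat_into) simp
    then show ?thesis using FB B(2) by auto
  qed
  have sep: "\<exists>n. (x \<in> D n) \<noteq> (y \<in> D n)" if xy: "x \<noteq> y" for x y
  proof -
    obtain b where "b\<in>F" "x\<in>b" "y\<notin>b" using sepF[OF xy] by blast
    moreover obtain n where "D n = b" unfolding D_def using from_nat_into_surj[of "insert UNIV F" b] cF \<open>b\<in>F\<close> by auto
    ultimately show ?thesis by blast
  qed
  interpret group_action G "UNIV :: 'x set" \<phi> by (rule act)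
  interpret grp: group G using group_hom group_hom.axioms(1) by auto
  have freeL: "k = g" if "k \<in> carrier G" "g \<in> carrier G" "\<phi> k y = \<phi> g y" for k g y
  proof -
    have "\<phi> (inv\<^bsub>G\<^esub> g) (\<phi> g y) = y" using orbit_sym_aux[of g y] that by simp
    then have "\<phi> (inv\<^bsub>G\<^esub> g \<otimes>\<^bsub>G\<^esub> k) y = y" using composition_rule[of y "inv\<^bsub>G\<^esub> g" k] that by simp
    then have "inv\<^bsub>G\<^esub> g \<otimes>\<^bsub>G\<^esub> k \<in> stabilizer G \<phi> y" unfolding stabilizer_def using that by simp
    then have "inv\<^bsub>G\<^esub> g \<otimes>\<^bsub>G\<^esub> k = \<one>\<^bsub>G\<^esub>" using free by blast
    then have "inv\<^bsub>G\<^esub> k = inv\<^bsub>G\<^esub> g" using that by (intro grp.inv_equality) auto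
    then show "k = g" using that by (metis grp.inv_inv)
  qed
  have reflE: "(x, x) \<in> E" for x using eqv unfolding equiv_def refl_on_def by auto
  define S where "S x = lexmin D (E `` {x})" for x
  have Sin: "S x \<in> E `` {x}" for x
    unfolding S_def using lexmin_in[OF sep fin] reflE by blast
  have Smin: "\<forall>z\<in>E `` {x}. z \<noteq> S x \<longrightarrow> lexlt D (S x) z" for x
    unfolding S_def using lexmin_prop[OF sep fin] reflE by blast
  have SE: "(x, S x) \<in> E" for x using Sin by blast
  have Seq: "(x, y) \<in> E \<longleftrightarrow> S x = S y" for x y
  proof
    assume "(x,y) \<in> E"
    then have "E``{x} = E``{y}" using equiv_class_eq_iff[OF eqv] by blast
    then show "S x = S y" unfolding S_def by simp
  next
    assume "S x = S y"
    then have "(S y, y) \<in> E" using SE[of y] eqv unfolding equiv_def by (metis symD)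
    then show "(x,y) \<in> E" using SE[of x] eqv \<open>S x = S y\<close> unfolding equiv_def by (metis transD)
  qed
  have loc: "\<exists>U k0. open U \<and> x \<in> U \<and> k0 \<in> carrier G \<and> (\<forall>y\<in>U. S y = \<phi> k0 y)" for x
  proof -
    define A where "A = {k\<in>K. (x, \<phi> k x) \<in> E}"
    define Q where "Q k = {y. (y, \<phi> k y) \<in> E}" for k
    have Qc: "open (Q k) \<and> closed (Q k)" if "k \<in> K" for k
      using Eclo K(1) that unfolding G_clopen_def Q_def by blast
    define V where "V = (\<Inter>k\<in>K. if k \<in> A then Q k else - Q k)"
    have "open V" unfolding V_def
    proof (rule open_INT[OF K(2)], intro ballI)
      fix k assume "k \<in> K"
      then show "open (if k \<in> A then Q k else - Q k)" using Qc[of k] by (cases "k \<in> A") (simp_all add: open_Compl)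
    qed
    have xk: "x \<in> (if k \<in> A then Q k else - Q k)" if "k \<in> K" for k
      using that by (cases "k \<in> A") (simp_all add: A_def Q_def)
    have "x \<in> V" unfolding V_def using xk by blast
    have yV: "y \<in> Q k \<longleftrightarrow> k \<in> A" if "y \<in> V" "k \<in> K" for y k
    proof -
      have "y \<in> (if k \<in> A then Q k else - Q k)" using that unfolding V_def by blast
      then show ?thesis by (cases "k \<in> A") simp_all
    qed
    have cls: "E``{y} = (\<lambda>k. \<phi> k y) ` A" if "y \<in> V" for y
    proof
      show "E``{y} \<subseteq> (\<lambda>k. \<phi> k y) ` A"
      proof
        fix z assume z: "z \<in> E``{y}"
        then obtain k where k: "k \<in> K" "z = \<phi> k y" using EK by blast
        then have "y \<in> Q k" using z unfolding Q_def by auto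
        then have "k \<in> A" using yV[OF that k(1)] by blast
        then show "z \<in> (\<lambda>k. \<phi> k y) ` A" using k by blast
      qed
    next
      show "(\<lambda>k. \<phi> k y) ` A \<subseteq> E``{y}"
      proof
        fix z assume "z \<in> (\<lambda>k. \<phi> k y) ` A"
        then obtain k where k: "k \<in> A" "z = \<phi> k y" by blast
        then have "k \<in> K" unfolding A_def by blast
        then have "y \<in> Q k" using yV[OF that] k(1) by blast
        then show "z \<in> E``{y}" using k(2) unfolding Q_def by blast
      qed
    qed
    obtain k0 where k0: "k0 \<in> A" "S x = \<phi> k0 x" using Sin[of x] cls[OF \<open>x\<in>V\<close>] by auto
    have AK: "A \<subseteq> K" unfolding A_def by auto
    have k0G: "k0 \<in> carrier G" using k0(1) AK K(1) by auto
    have "\<forall>k\<in>A-{k0}. \<exists>W. open W \<and> x \<in> W \<and> (\<forall>y\<in>W. lexlt D (\<phi> k0 y) (\<phi> k y))"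
    proof
      fix k assume k: "k \<in> A - {k0}"
      then have kG: "k \<in> carrier G" using AK K(1) by auto
      have "\<phi> k x \<noteq> \<phi> k0 x" using freeL[OF kG k0G] k by blast
      moreover have "\<phi> k x \<in> E``{x}" using k cls[OF \<open>x\<in>V\<close>] by blast
      ultimately have "lexlt D (S x) (\<phi> k x)" using Smin[of x] k0(2) by auto
      then have "lexlt D (\<phi> k0 x) (\<phi> k x)" using k0(2) by simp
      then show "\<exists>W. open W \<and> x \<in> W \<and> (\<forall>y\<in>W. lexlt D (\<phi> k0 y) (\<phi> k y))"
        using lexlt_local[where D=D and f="\<phi> k0" and h="\<phi> k" and x=x, OF clo cont[OF k0G] cont[OF kG]] by blast
    qed
    then obtain Wf where Wf: "\<forall>k\<in>A-{k0}. open (Wf k) \<and> x \<in> Wf k \<and> (\<forall>y\<in>Wf k. lexlt D (\<phi> k0 y) (\<phi> k y))"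
      by (rule bchoice[THEN exE])
    define U where "U = V \<inter> (\<Inter>k\<in>A-{k0}. Wf k)"
    have "finite A" using AK K(2) finite_subset by blast
    then have "open U" unfolding U_def using \<open>open V\<close> Wf by (intro open_Int open_INT) auto
    moreover have "x \<in> U" unfolding U_def using \<open>x\<in>V\<close> Wf by auto
    moreover have "\<forall>y\<in>U. S y = \<phi> k0 y"
    proof
      fix y assume y: "y \<in> U"
      then have yV: "y \<in> V" unfolding U_def by auto
      show "S y = \<phi> k0 y" unfolding S_def
      proof (rule lexmin_eq)
        show "\<phi> k0 y \<in> E``{y}" using cls[OF yV] k0(1) by blast
        show "\<forall>z\<in>E``{y}. z \<noteq> \<phi> k0 y \<longrightarrow> lexlt D (\<phi> k0 y) z"
        proof (intro ballI impI)
          fix z assume "z \<in> E``{y}" "z \<noteq> \<phi> k0 y"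
          then obtain k where k: "k \<in> A" "z = \<phi> k y" "k \<noteq> k0" using cls[OF yV] by auto
          then show "lexlt D (\<phi> k0 y) z" using Wf y unfolding U_def by auto
        qed
      qed
    qed
    ultimately show ?thesis using k0G by blast
  qed
  have "continuous_on UNIV S"
  proof (rule continuous_at_imp_continuous_on, intro ballI)
    fix x :: 'x
    obtain U k0 where U: "open U" "x \<in> U" "k0 \<in> carrier G" "\<forall>y\<in>U. S y = \<phi> k0 y" using loc by blast
    have "isCont (\<phi> k0) x" using cont[OF U(3)] continuous_on_eq_continuous_at open_UNIV by blast
    moreover have "eventually (\<lambda>y. S y = \<phi> k0 y) (nhds x)" unfolding eventually_nhds using U by blast
    ultimately show "isCont S x" using isCont_cong by blast
  qed
  moreover have "G_clopen G \<phi> (graph_of S)"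
    unfolding G_clopen_def
  proof (intro ballI conjI)
    fix g assume gG: "g \<in> carrier G"
    have eq: "{x. (x, \<phi> g x) \<in> graph_of S} = {x. S x = \<phi> g x}" unfolding graph_of_def by auto
    show "open {x. (x, \<phi> g x) \<in> graph_of S}" unfolding eq
    proof (subst open_subopen, intro ballI)
      fix x assume x: "x \<in> {x. S x = \<phi> g x}"
      obtain U k0 where U: "open U" "x \<in> U" "k0 \<in> carrier G" "\<forall>y\<in>U. S y = \<phi> k0 y" using loc by blast
      have "k0 = g" using freeL[OF U(3) gG, of x] U x by auto
      then show "\<exists>T. open T \<and> x \<in> T \<and> T \<subseteq> {x. S x = \<phi> g x}" using U by blast
    qed
    show "closed {x. (x, \<phi> g x) \<in> graph_of S}" unfolding eq closed_def
    proof (subst open_subopen, intro ballI)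
      fix x assume x: "x \<in> - {x. S x = \<phi> g x}"
      obtain U k0 where U: "open U" "x \<in> U" "k0 \<in> carrier G" "\<forall>y\<in>U. S y = \<phi> k0 y" using loc by blast
      have "k0 \<noteq> g" using U x by auto
      then have "U \<subseteq> - {x. S x = \<phi> g x}" using U freeL[OF U(3) gG] by auto
      then show "\<exists>T. open T \<and> x \<in> T \<and> T \<subseteq> - {x. S x = \<phi> g x}" using U by blast
    qed
  qed
  ultimately show ?thesis using SE Seq by blast
qed

end
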